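(* Let $G$ be an edge-colored graph of order $n$ such that $\delta^c(G)=n-1$ (so $G$ is complete and any two edges sharing a vertex have distinct colors). Then for any subset $S\subseteq V(G)$ with $|S|=5$, $G[S]$ contains a rainbow $C_4$.
   Context: An edge-colored graph is a finite simple graph $G$ with a map $C:E(G)\to\mathbb{N}$. The color degree $d^c(v)$ is the number of distinct colors on edges incident to $v$; $\delta^c(G)=\min_v d^c(v)$. A subgraph is rainbow if all its edges have distinct colors; $C_4$ is a cycle of length 4; $G[S]$ is the induced subgraph. *)

theory Defs
  imports Main
begin

definition simple_graph :: "'a set \<Rightarrow> 'a set set \<Rightarrow> bool" where
  "simple_graph V E \<longleftrightarrow> finite V \<and> (\<forall>e\<in>E. e \<subseteq> V \<and> card e = 2)"

definition color_degree :: "'a set set \<Rightarrow> ('a set \<Rightarrow> nat) \<Rightarrow> 'a \<Rightarrow> nat" where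
  "color_degree E C v = card (C ` {e \<in> E. v \<in> e})"

definition min_color_degree :: "'a set \<Rightarrow> 'a set set \<Rightarrow> ('a set \<Rightarrow> nat) \<Rightarrow> nat" where
  "min_color_degree V E C = Min (color_degree E C ` V)"

definition has_rainbow_C4_in :: "'a set set \<Rightarrow> ('a set \<Rightarrow> nat) \<Rightarrow> 'a set \<Rightarrow> bool" where
  "has_rainbow_C4_in E C S \<longleftrightarrow>
     (\<exists>a b c d. a \<in> S \<and> b \<in> S \<and> c \<in> S \<and> d \<in> S \<and> distinct [a, b, c, d] \<and>
        {a, b} \<in> E \<and> {b, c} \<in> E \<and> {c, d} \<in> E \<and> {d, a} \<in> E \<and>
        distinct [C {a, b}, C {b, c}, C {c, d}, C {d, a}])"

end

theory Submission
  imports Defs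
begin

lemma core:
  fixes cab cac cad cae cbc cbd cbe ccd cce cde :: nat
  assumes "cab \<noteq> cac"
    and "cab \<noteq> cad"
    and "cab \<noteq> cae"
    and "cab \<noteq> cbc"
    and "cab \<noteq> cbd"
    and "cab \<noteq> cbe"
    and "cac \<noteq> cad"
    and "cac \<noteq> cae"
    and "cac \<noteq> cbc"
    and "cac \<noteq> ccd"
    and "cac \<noteq> cce"
    and "cad \<noteq> cae"
    and "cad \<noteq> cbd"
    and "cad \<noteq> ccd"
    and "cad \<noteq> cde"
    and "cae \<noteq> cbe"
    and "cae \<noteq> cce"
    and "cae \<noteq> cde"
    and "cbc \<noteq> cbd"
    and "cbc \<noteq> cbe"
    and "cbc \<noteq> ccd"
    and "cbc \<noteq> cce"
    and "cbd \<noteq> cbe"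
    and "cbd \<noteq> ccd"
    and "cbd \<noteq> cde"
    and "cbe \<noteq> cce"
    and "cbe \<noteq> cde"
    and "ccd \<noteq> cce"
    and "ccd \<noteq> cde"
    and "cce \<noteq> cde"
  shows "(cab \<noteq> ccd \<and> cbc \<noteq> cad) \<or>
    (cab \<noteq> ccd \<and> cbd \<noteq> cac) \<or>
    (cac \<noteq> cbd \<and> cbc \<noteq> cad) \<or>
    (cab \<noteq> cce \<and> cbc \<noteq> cae) \<or>
    (cab \<noteq> cce \<and> cbe \<noteq> cac) \<or>
    (cac \<noteq> cbe \<and> cbc \<noteq> cae) \<or>
    (cab \<noteq> cde \<and> cbd \<noteq> cae) \<or>
    (cab \<noteq> cde \<and> cbe \<noteq> cad) \<or>
    (cad \<noteq> cbe \<and> cbd \<noteq> cae) \<or>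
    (cac \<noteq> cde \<and> ccd \<noteq> cae) \<or>
    (cac \<noteq> cde \<and> cce \<noteq> cad) \<or>
    (cad \<noteq> cce \<and> ccd \<noteq> cae) \<or>
    (cbc \<noteq> cde \<and> ccd \<noteq> cbe) \<or>
    (cbc \<noteq> cde \<and> cce \<noteq> cbd) \<or>
    (cbd \<noteq> cce \<and> ccd \<noteq> cbe)"
  using assms by smt

lemma cyc:
  assumes edge: "\<And>x y. x \<in> S \<Longrightarrow> y \<in> S \<Longrightarrow> x \<noteq> y \<Longrightarrow> {x,y} \<in> E"
    and prp: "\<And>x y z. x \<in> S \<Longrightarrow> y \<in> S \<Longrightarrow> z \<in> S \<Longrightarrow> x \<noteq> y \<Longrightarrow> x \<noteq> z \<Longrightarrow> y \<noteq> z \<Longrightarrow> C {x,y} \<noteq> C {x,z}"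
    and "a \<in> S" "b \<in> S" "c \<in> S" "d \<in> S" "distinct [a,b,c,d]"
    and "C {a,b} \<noteq> C {c,d}" "C {b,c} \<noteq> C {d,a}"
  shows "has_rainbow_C4_in E C S"
proof -
  have 1: "C {a,b} \<noteq> C {b,c}" using prp[of b a c] assms(3-7) by (auto simp: insert_commute)
  have 2: "C {b,c} \<noteq> C {c,d}" using prp[of c b d] assms(3-7) by (auto simp: insert_commute)
  have 3: "C {c,d} \<noteq> C {d,a}" using prp[of d c a] assms(3-7) by (auto simp: insert_commute)
  have 4: "C {d,a} \<noteq> C {a,b}" using prp[of a d b] assms(3-7) by (auto simp: insert_commute)
  show ?thesis unfolding has_rainbow_C4_in_def
    apply (rule exI[of _ a], rule exI[of _ b], rule exI[of _ c], rule exI[of _ d])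
    using assms 1 2 3 4 edge[of a b] edge[of b c] edge[of c d] edge[of d a] by auto
qed

lemma k5:
  assumes edge: "\<And>x y. x \<in> S \<Longrightarrow> y \<in> S \<Longrightarrow> x \<noteq> y \<Longrightarrow> {x,y} \<in> E"
    and prp: "\<And>x y z. x \<in> S \<Longrightarrow> y \<in> S \<Longrightarrow> z \<in> S \<Longrightarrow> x \<noteq> y \<Longrightarrow> x \<noteq> z \<Longrightarrow> y \<noteq> z \<Longrightarrow> C {x,y} \<noteq> C {x,z}"
    and S: "a \<in> S" "b \<in> S" "c \<in> S" "d \<in> S" "e \<in> S" "distinct [a,b,c,d,e]"
  shows "has_rainbow_C4_in E C S"
proof -
  have P: "\<And>x y z. x \<in> {a,b,c,d,e} \<Longrightarrow> y \<in> {a,b,c,d,e} \<Longrightarrow> z \<in> {a,b,c,d,e} \<Longrightarrow> x \<noteq> y \<Longrightarrow> x \<noteq> z \<Longrightarrow> y \<noteq> z \<Longrightarrow> C {x,y} \<noteq> C {x,z}"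
    using prp S by blast
  have h0: "C {a,b} \<noteq> C {a,c}" using P[of a b c] S by (auto simp: insert_commute)
  have h1: "C {a,b} \<noteq> C {a,d}" using P[of a b d] S by (auto simp: insert_commute)
  have h2: "C {a,b} \<noteq> C {a,e}" using P[of a b e] S by (auto simp: insert_commute)
  have h3: "C {a,b} \<noteq> C {b,c}" using P[of b a c] S by (auto simp: insert_commute)
  have h4: "C {a,b} \<noteq> C {b,d}" using P[of b a d] S by (auto simp: insert_commute)
  have h5: "C {a,b} \<noteq> C {b,e}" using P[of b a e] S by (auto simp: insert_commute)
  have h6: "C {a,c} \<noteq> C {a,d}" using P[of a c d] S by (auto simp: insert_commute)
  have h7: "C {a,c} \<noteq> C {a,e}" using P[of a c e] S by (auto simp: insert_commute)
  have h8: "C {a,c} \<noteq> C {b,c}" using P[of c a b] S by (auto simp: insert_commute)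
  have h9: "C {a,c} \<noteq> C {c,d}" using P[of c a d] S by (auto simp: insert_commute)
  have h10: "C {a,c} \<noteq> C {c,e}" using P[of c a e] S by (auto simp: insert_commute)
  have h11: "C {a,d} \<noteq> C {a,e}" using P[of a d e] S by (auto simp: insert_commute)
  have h12: "C {a,d} \<noteq> C {b,d}" using P[of d a b] S by (auto simp: insert_commute)
  have h13: "C {a,d} \<noteq> C {c,d}" using P[of d a c] S by (auto simp: insert_commute)
  have h14: "C {a,d} \<noteq> C {d,e}" using P[of d a e] S by (auto simp: insert_commute)
  have h15: "C {a,e} \<noteq> C {b,e}" using P[of e a b] S by (auto simp: insert_commute)
  have h16: "C {a,e} \<noteq> C {c,e}" using P[of e a c] S by (auto simp: insert_commute)
  have h17: "C {a,e} \<noteq> C {d,e}" using P[of e a d] S by (auto simp: insert_commute)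
  have h18: "C {b,c} \<noteq> C {b,d}" using P[of b c d] S by (auto simp: insert_commute)
  have h19: "C {b,c} \<noteq> C {b,e}" using P[of b c e] S by (auto simp: insert_commute)
  have h20: "C {b,c} \<noteq> C {c,d}" using P[of c b d] S by (auto simp: insert_commute)
  have h21: "C {b,c} \<noteq> C {c,e}" using P[of c b e] S by (auto simp: insert_commute)
  have h22: "C {b,d} \<noteq> C {b,e}" using P[of b d e] S by (auto simp: insert_commute)
  have h23: "C {b,d} \<noteq> C {c,d}" using P[of d b c] S by (auto simp: insert_commute)
  have h24: "C {b,d} \<noteq> C {d,e}" using P[of d b e] S by (auto simp: insert_commute)
  have h25: "C {b,e} \<noteq> C {c,e}" using P[of e b c] S by (auto simp: insert_commute)
  have h26: "C {b,e} \<noteq> C {d,e}" using P[of e b d] S by (auto simp: insert_commute)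
  have h27: "C {c,d} \<noteq> C {c,e}" using P[of c d e] S by (auto simp: insert_commute)
  have h28: "C {c,d} \<noteq> C {d,e}" using P[of d c e] S by (auto simp: insert_commute)
  have h29: "C {c,e} \<noteq> C {d,e}" using P[of e c d] S by (auto simp: insert_commute)
  note D = core[OF h0 h1 h2 h3 h4 h5 h6 h7 h8 h9 h10 h11 h12 h13 h14 h15 h16 h17 h18 h19 h20 h21 h22 h23 h24 h25 h26 h27 h28 h29]
  have R0: "C {a,b} \<noteq> C {c,d} \<Longrightarrow> C {b,c} \<noteq> C {a,d} \<Longrightarrow> has_rainbow_C4_in E C S"
    using cyc[where S=S and E=E and C=C and a=a and b=b and c=c and d=d, OF edge prp] S by (auto simp: insert_commute)
  have R1: "C {a,b} \<noteq> C {c,d} \<Longrightarrow> C {b,d} \<noteq> C {a,c} \<Longrightarrow> has_rainbow_C4_in E C S"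
    using cyc[where S=S and E=E and C=C and a=a and b=b and c=d and d=c, OF edge prp] S by (auto simp: insert_commute)
  have R2: "C {a,c} \<noteq> C {b,d} \<Longrightarrow> C {b,c} \<noteq> C {a,d} \<Longrightarrow> has_rainbow_C4_in E C S"
    using cyc[where S=S and E=E and C=C and a=a and b=c and c=b and d=d, OF edge prp] S by (auto simp: insert_commute)
  have R3: "C {a,b} \<noteq> C {c,e} \<Longrightarrow> C {b,c} \<noteq> C {a,e} \<Longrightarrow> has_rainbow_C4_in E C S"
    using cyc[where S=S and E=E and C=C and a=a and b=b and c=c and d=e, OF edge prp] S by (auto simp: insert_commute)
  have R4: "C {a,b} \<noteq> C {c,e} \<Longrightarrow> C {b,e} \<noteq> C {a,c} \<Longrightarrow> has_rainbow_C4_in E C S"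
    using cyc[where S=S and E=E and C=C and a=a and b=b and c=e and d=c, OF edge prp] S by (auto simp: insert_commute)
  have R5: "C {a,c} \<noteq> C {b,e} \<Longrightarrow> C {b,c} \<noteq> C {a,e} \<Longrightarrow> has_rainbow_C4_in E C S"
    using cyc[where S=S and E=E and C=C and a=a and b=c and c=b and d=e, OF edge prp] S by (auto simp: insert_commute)
  have R6: "C {a,b} \<noteq> C {d,e} \<Longrightarrow> C {b,d} \<noteq> C {a,e} \<Longrightarrow> has_rainbow_C4_in E C S"
    using cyc[where S=S and E=E and C=C and a=a and b=b and c=d and d=e, OF edge prp] S by (auto simp: insert_commute)
  have R7: "C {a,b} \<noteq> C {d,e} \<Longrightarrow> C {b,e} \<noteq> C {a,d} \<Longrightarrow> has_rainbow_C4_in E C S"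
    using cyc[where S=S and E=E and C=C and a=a and b=b and c=e and d=d, OF edge prp] S by (auto simp: insert_commute)
  have R8: "C {a,d} \<noteq> C {b,e} \<Longrightarrow> C {b,d} \<noteq> C {a,e} \<Longrightarrow> has_rainbow_C4_in E C S"
    using cyc[where S=S and E=E and C=C and a=a and b=d and c=b and d=e, OF edge prp] S by (auto simp: insert_commute)
  have R9: "C {a,c} \<noteq> C {d,e} \<Longrightarrow> C {c,d} \<noteq> C {a,e} \<Longrightarrow> has_rainbow_C4_in E C S"
    using cyc[where S=S and E=E and C=C and a=a and b=c and c=d and d=e, OF edge prp] S by (auto simp: insert_commute)
  have R10: "C {a,c} \<noteq> C {d,e} \<Longrightarrow> C {c,e} \<noteq> C {a,d} \<Longrightarrow> has_rainbow_C4_in E C S"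
    using cyc[where S=S and E=E and C=C and a=a and b=c and c=e and d=d, OF edge prp] S by (auto simp: insert_commute)
  have R11: "C {a,d} \<noteq> C {c,e} \<Longrightarrow> C {c,d} \<noteq> C {a,e} \<Longrightarrow> has_rainbow_C4_in E C S"
    using cyc[where S=S and E=E and C=C and a=a and b=d and c=c and d=e, OF edge prp] S by (auto simp: insert_commute)
  have R12: "C {b,c} \<noteq> C {d,e} \<Longrightarrow> C {c,d} \<noteq> C {b,e} \<Longrightarrow> has_rainbow_C4_in E C S"
    using cyc[where S=S and E=E and C=C and a=b and b=c and c=d and d=e, OF edge prp] S by (auto simp: insert_commute)
  have R13: "C {b,c} \<noteq> C {d,e} \<Longrightarrow> C {c,e} \<noteq> C {b,d} \<Longrightarrow> has_rainbow_C4_in E C S"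
    using cyc[where S=S and E=E and C=C and a=b and b=c and c=e and d=d, OF edge prp] S by (auto simp: insert_commute)
  have R14: "C {b,d} \<noteq> C {c,e} \<Longrightarrow> C {c,d} \<noteq> C {b,e} \<Longrightarrow> has_rainbow_C4_in E C S"
    using cyc[where S=S and E=E and C=C and a=b and b=d and c=c and d=e, OF edge prp] S by (auto simp: insert_commute)
  show ?thesis using D R0 R1 R2 R3 R4 R5 R6 R7 R8 R9 R10 R11 R12 R13 R14 by blast
qed

theorem lemma10:
  fixes V :: "'a set" and E :: "'a set set" and C :: "'a set \<Rightarrow> nat" and S :: "'a set"
  assumes "simple_graph V E"
    and "min_color_degree V E C = card V - 1"
    and "S \<subseteq> V" and "card S = 5"
  shows "has_rainbow_C4_in E C S"
proof -
  have fin: "finite V" and Ecard: "\<And>e. e \<in> E \<Longrightarrow> e \<subseteq> V \<and> card e = 2"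
    using assms(1) unfolding simple_graph_def by auto
  obtain a b c d e where Sd: "S = {a,b,c,d,e}" "distinct [a,b,c,d,e]"
  proof -
    have "card S = Suc 4" using assms(4) by simp
    from card_eq_SucD[OF this] obtain a S1 where 1: "S = insert a S1" "a \<notin> S1" "card S1 = 4" by blast
    have "card S1 = Suc 3" using 1 by simp
    from card_eq_SucD[OF this] obtain b S2 where 2: "S1 = insert b S2" "b \<notin> S2" "card S2 = 3" by blast
    have "card S2 = Suc 2" using 2 by simp
    from card_eq_SucD[OF this] obtain c S3 where 3: "S2 = insert c S3" "c \<notin> S3" "card S3 = 2" by blast
    have "card S3 = Suc 1" using 3 by simp
    from card_eq_SucD[OF this] obtain d S4 where 4: "S3 = insert d S4" "d \<notin> S4" "card S4 = 1" by blast
    then obtain e where 5: "S4 = {e}" by (auto simp: card_Suc_eq)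
    show ?thesis using that[of a b c d e] 1 2 3 4 5 by auto
  qed
  have Vne: "V \<noteq> {}" using Sd assms(3) by auto
  have key: "{e\<in>E. v \<in> e} = (\<lambda>u. {v,u}) ` (V - {v}) \<and> inj_on C {e\<in>E. v \<in> e}" if v: "v \<in> V" for v
  proof -
    let ?A = "{e\<in>E. v \<in> e}"
    let ?B = "(\<lambda>u. {v,u}) ` (V - {v})"
    have "min_color_degree V E C \<le> color_degree E C v"
      unfolding min_color_degree_def using fin v by simp
    then have ge: "card (C ` ?A) \<ge> card V - 1" using assms(2) unfolding color_degree_def by simp
    have AB: "?A \<subseteq> ?B"
    proof
      fix e assume e: "e \<in> ?A"
      then have "e \<subseteq> V" "card e = 2" "v \<in> e" using Ecard by auto
      then obtain x y where "e = {x,y}" "x \<noteq> y" by (auto simp: card_2_iff)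
      then show "e \<in> ?B" using \<open>e \<subseteq> V\<close> \<open>v \<in> e\<close> by (auto simp: insert_commute)
    qed
    have finB: "finite ?B" using fin by simp
    have cB: "card ?B \<le> card V - 1"
      using card_image_le[of "V - {v}" "\<lambda>u. {v,u}"] fin v by simp
    have finA: "finite ?A" using finB AB finite_subset by blast
    have c1: "card (C ` ?A) \<le> card ?A" using card_image_le finA by blast
    have c2: "card ?A \<le> card ?B" using card_mono[OF finB AB] .
    have "?A = ?B" using card_subset_eq[OF finB AB] c1 c2 cB ge by linarith
    moreover have "inj_on C ?A" using eq_card_imp_inj_on[OF finA, of C] c1 c2 cB ge by linarith
    ultimately show ?thesis by blast
  qed
  have edge: "\<And>x y. x \<in> S \<Longrightarrow> y \<in> S \<Longrightarrow> x \<noteq> y \<Longrightarrow> {x,y} \<in> E"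
  proof -
    fix x y assume "x \<in> S" "y \<in> S" "x \<noteq> y"
    then have "x \<in> V" "y \<in> V" using assms(3) by auto
    then have "{x,y} \<in> {e\<in>E. x \<in> e}" using key[of x] \<open>x \<noteq> y\<close> by auto
    then show "{x,y} \<in> E" by simp
  qed
  have prp: "\<And>x y z. x \<in> S \<Longrightarrow> y \<in> S \<Longrightarrow> z \<in> S \<Longrightarrow> x \<noteq> y \<Longrightarrow> x \<noteq> z \<Longrightarrow> y \<noteq> z \<Longrightarrow> C {x,y} \<noteq> C {x,z}"
  proof -
    fix x y z assume xyz: "x \<in> S" "y \<in> S" "z \<in> S" "x \<noteq> y" "x \<noteq> z" "y \<noteq> z"
    then have "x \<in> V" "y \<in> V" "z \<in> V" using assms(3) by auto
    then have 1: "{x,y} \<in> {e\<in>E. x \<in> e}" "{x,z} \<in> {e\<in>E. x \<in> e}" and inj: "inj_on C {e\<in>E. x \<in> e}"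
      using key[of x] xyz by auto
    have "{x,y} \<noteq> {x,z}" using xyz by (auto simp: doubleton_eq_iff)
    then show "C {x,y} \<noteq> C {x,z}" using inj_onD[OF inj _ 1] by blast
  qed
  show ?thesis
    by (rule k5[where S=S and E=E and C=C and a=a and b=b and c=c and d=d and e=e, OF edge prp]) (use Sd in auto)
qed

end
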